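(* Let $n\ge2$, $1\le k\le n-1$ and $n-1\ge m_1>\dots>m_k\ge1$. Let the complement of $\{n-m_1,\dots,n-m_k\}$ in $\{1,\dots,n\}$ be $\{j_1<j_2<\dots<j_{n-k}\}$ (so $j_{n-k}=n$) and set $C(m_1,\dots,m_k)=(n-j_1,\dots,n-j_{n-k-1})$. Then $C(C(m_1,\dots,m_k))=(m_1,\dots,m_k)$. Write \[ \omega_{m_1,\dots,m_k}:=d_{m_1}\cdots d_{m_k}\Delta=\sum_{1\le i_1<\dots<i_k\le n}h^{m_1\dots m_k}_{i_1\dots i_k}\,dx_{i_1}\wedge\cdots\wedge dx_{i_k}, \] where $\Delta=\prod_{1\le i<j\le n}(x_i-x_j)$. Then the coefficient of the monomial $x_1^{n-j_1}x_2^{n-j_2}\cdots x_{n-k-1}^{n-j_{n-k-1}}$ in $h^{m_1\dots m_k}_{n-k+1,n-k+2,\dots,n}$ is $\pm k!\,m_1!\cdots m_k!$. Finally, if $n-1\ge r_1>\dots>r_k\ge1$ and this monomial occurs with non-zero coefficient in $h^{r_1\dots r_k}_{n-k+1,n-k+2,\dots,n}$, then $r_i=m_i$ for all $i=1,\dots,k$.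
   Context: Forms live in $\mathbb{R}[x_1,\dots,x_n]\otimes\wedge\mathbb{R}^n$. With $\partial_i=\partial/\partial x_i$, $d_j(h\,dx_{i_1}\wedge\cdots\wedge dx_{i_k})=\sum_{l=1}^n(\partial_l^jh)\,dx_l\wedge dx_{i_1}\wedge\cdots\wedge dx_{i_k}$, extended linearly. *)

theory Defs
  imports Complex_Main "HOL-Library.Poly_Mapping"
begin

type_synonym rpoly = "(nat \<Rightarrow>\<^sub>0 nat) \<Rightarrow>\<^sub>0 real"

definition var :: "nat \<Rightarrow> rpoly" where
  "var i = Poly_Mapping.single (Poly_Mapping.single i 1) 1"

definition coeff_of :: "rpoly \<Rightarrow> (nat \<Rightarrow>\<^sub>0 nat) \<Rightarrow> real" where
  "coeff_of p a = Poly_Mapping.lookup p a"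

definition pdiff :: "nat \<Rightarrow> rpoly \<Rightarrow> rpoly" where
  "pdiff i p = (\<Sum>a\<in>Poly_Mapping.keys p. Poly_Mapping.single (a - Poly_Mapping.single i 1)
                                   (Poly_Mapping.lookup p a * of_nat (Poly_Mapping.lookup a i)))"

(* Differential forms in R[x_1..x_n] \<otimes> \<wedge>R^n, represented by their coefficients:
  a form w is \<Sum>_I w I dx_I, I ranging over subsets of {1..n}, where dx_I is the wedge
  product of the dx_i, i \<in> I, in increasing order. *)
type_synonym rform = "nat set \<Rightarrow> rpoly"

(* d_j (h dx_I) = \<Sum>_l (\<partial>_l^j h) dx_l \<wedge> dx_I.  Since dx_l \<wedge> dx_I = 0 for l \<in> I and
  dx_l \<wedge> dx_I = (-1)^{#{i \<in> I. i < l}} dx_{I \<union> {l}} otherwise, the coefficient of dx_J in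
  d_j w is \<Sum>_{l \<in> J} (-1)^{#{i \<in> J. i < l}} \<partial>_l^j (w (J - {l})). *)
definition dj :: "nat \<Rightarrow> nat \<Rightarrow> rform \<Rightarrow> rform" where
  "dj n j w J = (if J \<subseteq> {1..n}
     then (\<Sum>l\<in>J. (-1) ^ card {i\<in>J. i < l} * (pdiff l ^^ j) (w (J - {l})))
     else 0)"

definition Delta :: "nat \<Rightarrow> rpoly" where
  "Delta n = (\<Prod>(i,j)\<in>{(i,j). 1 \<le> i \<and> i < j \<and> j \<le> n}. var i - var j)"

definition zero_form :: "rpoly \<Rightarrow> rform" where
  "zero_form h J = (if J = {} then h else 0)"

definition omega :: "nat \<Rightarrow> nat list \<Rightarrow> rform" where
  "omega n ms = foldr (dj n) ms (zero_form (Delta n))"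

definition Cmap :: "nat \<Rightarrow> nat list \<Rightarrow> nat list" where
  "Cmap n ms = map (\<lambda>j. n - j)
      (butlast (sorted_list_of_set ({1..n} - (\<lambda>m. n - m) ` set ms)))"

definition mono_exp :: "nat list \<Rightarrow> (nat \<Rightarrow>\<^sub>0 nat)" where
  "mono_exp cs = (\<Sum>t<length cs. Poly_Mapping.single (Suc t) (cs ! t))"

end

theory Submission
  imports Defs
begin


abbreviation lk where "lk \<equiv> Poly_Mapping.lookup"
abbreviation sg where "sg \<equiv> Poly_Mapping.single"
abbreviation ks where "ks \<equiv> Poly_Mapping.keys"

lemma poly_expand: "(p::rpoly) = (\<Sum>a\<in>ks p. sg a (lk p a))"
proof (rule poly_mapping_eqI)
  fix k
  have "lk (\<Sum>a\<in>ks p. sg a (lk p a)) k = (\<Sum>a\<in>ks p. lk (sg a (lk p a)) k)"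
    by (simp add: lookup_sum)
  also have "\<dots> = (\<Sum>a\<in>ks p. if a = k then lk p a else 0)"
    by (intro sum.cong) (auto simp: lookup_single when_def)
  also have "\<dots> = lk p k" by (simp add: in_keys_iff)
  finally show "lk p k = lk (\<Sum>a\<in>ks p. sg a (lk p a)) k" by simp
qed

lemma hom_sum:
  assumes add: "\<And>p q. H (p + q) = H p + H q" and z: "H 0 = (0::rpoly)"
  shows "H (sum f A) = (\<Sum>x\<in>A. H (f x))"
  by (induction A rule: infinite_finite_induct) (auto simp: z add)

lemma hom_mult:
  fixes H :: "rpoly \<Rightarrow> rpoly"
  assumes add: "\<And>p q. H (p + q) = H p + H q" and z: "H 0 = 0"
    and sm: "\<And>a b c d. H (sg a c * sg b d) = H (sg a c) * H (sg b d)"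
  shows "H (p * q) = H p * H q"
proof -
  have "p * q = (\<Sum>a\<in>ks p. sg a (lk p a)) * (\<Sum>b\<in>ks q. sg b (lk q b))"
    using poly_expand[of p] poly_expand[of q] by simp
  also have "\<dots> = (\<Sum>a\<in>ks p. \<Sum>b\<in>ks q. sg a (lk p a) * sg b (lk q b))"
    by (simp add: sum_product)
  finally have pq: "p * q = \<dots>" .
  have "H (p * q) = (\<Sum>a\<in>ks p. \<Sum>b\<in>ks q. H (sg a (lk p a)) * H (sg b (lk q b)))"
    unfolding pq by (simp add: hom_sum[OF add z] sm)
  also have "\<dots> = (\<Sum>a\<in>ks p. H (sg a (lk p a))) * (\<Sum>b\<in>ks q. H (sg b (lk q b)))"
    by (simp add: sum_product)
  also have "\<dots> = H p * H q"
    by (subst (3) poly_expand[of p], subst (3) poly_expand[of q]) (simp add: hom_sum[OF add z])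
  finally show ?thesis .
qed

definition tr :: "nat \<Rightarrow> nat \<Rightarrow> nat \<Rightarrow> nat" where
  "tr x y i = (if i = x then y else if i = y then x else i)"

lemma tr_tr[simp]: "tr x y (tr x y i) = i" by (auto simp: tr_def)

definition swe :: "nat \<Rightarrow> nat \<Rightarrow> (nat \<Rightarrow>\<^sub>0 nat) \<Rightarrow> (nat \<Rightarrow>\<^sub>0 nat)" where
  "swe x y a = Abs_poly_mapping (\<lambda>i. lk a (tr x y i))"

lemma lk_swe[simp]: "lk (swe x y a) i = lk a (tr x y i)"
proof -
  have "{i. lk a (tr x y i) \<noteq> 0} \<subseteq> tr x y ` ks a"
  proof
    fix j assume "j \<in> {i. lk a (tr x y i) \<noteq> 0}"
    then have "tr x y j \<in> ks a" by (simp add: in_keys_iff)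
    then show "j \<in> tr x y ` ks a" by (intro image_eqI[where x="tr x y j"]) simp_all
  qed
  then have fin: "finite {i. lk a (tr x y i) \<noteq> 0}" by (rule finite_subset) simp
  show ?thesis unfolding swe_def using lookup_Abs_poly_mapping[OF fin] by simp
qed

lemma swe_swe[simp]: "swe x y (swe x y a) = a"
  by (rule poly_mapping_eqI) simp

lemma swe_add: "swe x y (a + b) = swe x y a + swe x y b"
  by (rule poly_mapping_eqI) (simp add: lookup_add)

lemma swe_zero[simp]: "swe x y 0 = 0"
  by (rule poly_mapping_eqI) simp

lemma swe_eq_0_iff[simp]: "swe x y k = 0 \<longleftrightarrow> k = 0"
  by (metis swe_swe swe_zero)

lemma swe_single[simp]: "swe x y (sg j v) = sg (tr x y j) v"
  by (rule poly_mapping_eqI) (auto simp: lookup_single when_def tr_def)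

definition ren :: "nat \<Rightarrow> nat \<Rightarrow> rpoly \<Rightarrow> rpoly" where
  "ren x y p = Abs_poly_mapping (\<lambda>a. lk p (swe x y a))"

lemma lk_ren[simp]: "lk (ren x y p) a = lk p (swe x y a)"
proof -
  have "{a. lk p (swe x y a) \<noteq> 0} \<subseteq> swe x y ` ks p"
  proof
    fix j assume "j \<in> {a. lk p (swe x y a) \<noteq> 0}"
    then have "swe x y j \<in> ks p" by (simp add: in_keys_iff)
    then show "j \<in> swe x y ` ks p" by (intro image_eqI[where x="swe x y j"]) simp_all
  qed
  then have fin: "finite {a. lk p (swe x y a) \<noteq> 0}" by (rule finite_subset) simp
  show ?thesis unfolding ren_def using lookup_Abs_poly_mapping[OF fin] by simp
qed

lemma ren_add: "ren x y (p + q) = ren x y p + ren x y q"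
  by (rule poly_mapping_eqI) (simp add: lookup_add)
lemma ren_zero[simp]: "ren x y 0 = 0"
  by (rule poly_mapping_eqI) simp
lemma ren_single[simp]: "ren x y (sg a c) = sg (swe x y a) c"
  by (rule poly_mapping_eqI) (auto simp: lookup_single when_def)
lemma ren_mult: "ren x y (p * q) = ren x y p * ren x y q"
  by (rule hom_mult) (auto simp: ren_add mult_single swe_add)
lemma ren_minus: "ren x y (p - q) = ren x y p - ren x y q"
  by (rule poly_mapping_eqI) (simp add: lookup_minus)
lemma ren_uminus: "ren x y (- p) = - ren x y p"
  by (rule poly_mapping_eqI) simp
lemma ren_one[simp]: "ren x y 1 = 1"
  by (rule poly_mapping_eqI) (simp add: lookup_one when_def)
lemma ren_prod: "ren x y (prod f A) = (\<Prod>i\<in>A. ren x y (f i))"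
  by (induction A rule: infinite_finite_induct) (auto simp: ren_mult)
lemma ren_power: "ren x y (p ^ m) = ren x y p ^ m"
  by (induction m) (auto simp: ren_mult)
lemma ren_var[simp]: "ren x y (var j) = var (tr x y j)"
  by (simp add: var_def)

definition restr :: "nat \<Rightarrow> rpoly \<Rightarrow> rpoly" where
  "restr i p = Abs_poly_mapping (\<lambda>a. if lk a i = 0 then lk p a else 0)"

lemma lk_restr[simp]: "lk (restr i p) a = (if lk a i = 0 then lk p a else 0)"
proof -
  have "{a. (if lk a i = 0 then lk p a else 0) \<noteq> 0} \<subseteq> ks p"
    by (auto simp: in_keys_iff)
  then have fin: "finite {a. (if lk a i = 0 then lk p a else 0) \<noteq> 0}" by (rule finite_subset) simp
  show ?thesis unfolding restr_def using lookup_Abs_poly_mapping[OF fin] by simp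
qed

lemma restr_add: "restr i (p + q) = restr i p + restr i q"
  by (rule poly_mapping_eqI) (simp add: lookup_add)
lemma restr_zero[simp]: "restr i 0 = 0"
  by (rule poly_mapping_eqI) simp
lemma restr_single: "restr i (sg a c) = (if lk a i = 0 then sg a c else 0)"
  by (rule poly_mapping_eqI) (auto simp: lookup_single when_def)
lemma restr_mult: "restr i (p * q) = restr i p * restr i q"
  by (rule hom_mult) (auto simp: restr_add mult_single restr_single lookup_add)
lemma restr_minus: "restr i (p - q) = restr i p - restr i q"
  by (rule poly_mapping_eqI) (simp add: lookup_minus)
lemma restr_uminus: "restr i (- p) = - restr i p"
  by (rule poly_mapping_eqI) simp
lemma restr_one[simp]: "restr i 1 = 1"
  by (rule poly_mapping_eqI) (simp add: lookup_one when_def)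
lemma restr_prod: "restr i (prod f A) = (\<Prod>j\<in>A. restr i (f j))"
  by (induction A rule: infinite_finite_induct) (auto simp: restr_mult)
lemma restr_power: "restr i (p ^ m) = restr i p ^ m"
  by (induction m) (auto simp: restr_mult)
lemma restr_var[simp]: "restr i (var j) = (if j = i then 0 else var j)"
  by (simp add: var_def restr_single lookup_single when_def)



definition prs :: "nat set \<Rightarrow> (nat \<times> nat) set" where
  "prs S = {(i,j). i\<in>S \<and> j\<in>S \<and> i<j}"

definition DeltaS :: "nat set \<Rightarrow> rpoly" where
  "DeltaS S = (\<Prod>(i,j)\<in>prs S. var i - var j)"

lemma Delta_eq: "Delta n = DeltaS {1..n}"
  unfolding Delta_def DeltaS_def prs_def by (rule prod.cong) auto

lemma finite_prs[simp]: "finite S \<Longrightarrow> finite (prs S)"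
  by (rule finite_subset[of _ "S \<times> S"]) (auto simp: prs_def)

lemma DeltaS_split:
  assumes S: "finite S" and i: "i \<in> S"
  shows "DeltaS S = (-1) ^ card {j\<in>S. j<i} * DeltaS (S-{i}) * (\<Prod>j\<in>S-{i}. var i - var j)"
proof -
  define f where "f = (\<lambda>(i::nat,j::nat). var i - var j)"
  define L where "L = {j\<in>S. j<i}"
  define R where "R = {j\<in>S. i<j}"
  have fL: "finite L" and fR: "finite R" using S by (auto simp: L_def R_def)
  have P: "prs S = prs (S-{i}) \<union> ((\<lambda>j. (j,i)) ` L \<union> (\<lambda>j. (i,j)) ` R)"
    using i by (auto simp: prs_def L_def R_def)
  have e1: "DeltaS S = prod f (prs (S-{i})) * prod f ((\<lambda>j. (j,i)) ` L \<union> (\<lambda>j. (i,j)) ` R)"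
    unfolding DeltaS_def f_def[symmetric] P
    by (rule prod.union_disjoint) (use S fL fR finite_prs[of "S-{i}"] in \<open>auto simp: prs_def L_def R_def\<close>)
  have e2: "prod f ((\<lambda>j. (j,i)) ` L \<union> (\<lambda>j. (i,j)) ` R)
      = prod f ((\<lambda>j. (j,i)) ` L) * prod f ((\<lambda>j. (i,j)) ` R)"
    by (rule prod.union_disjoint) (use fL fR in \<open>auto simp: L_def R_def\<close>)
  have "prod f ((\<lambda>j. (j,i)) ` L) = (\<Prod>j\<in>L. var j - var i)"
    by (subst prod.reindex) (auto simp: inj_on_def f_def)
  also have "\<dots> = (\<Prod>j\<in>L. (-1) * (var i - var j))"
    by (rule prod.cong) auto
  also have "\<dots> = (\<Prod>j\<in>L. (-1::rpoly)) * (\<Prod>j\<in>L. var i - var j)"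
    by (rule prod.distrib)
  also have "(\<Prod>j\<in>L. (-1::rpoly)) = (-1) ^ card L"
    by simp
  finally have e3: "prod f ((\<lambda>j. (j,i)) ` L) = (-1) ^ card L * (\<Prod>j\<in>L. var i - var j)" .
  have e4: "prod f ((\<lambda>j. (i,j)) ` R) = (\<Prod>j\<in>R. var i - var j)"
    by (subst prod.reindex) (auto simp: inj_on_def f_def)
  have LR: "L \<inter> R = {}" by (auto simp: L_def R_def)
  have SLR: "S-{i} = L \<union> R" by (auto simp: L_def R_def)
  have e5: "(\<Prod>j\<in>S-{i}. var i - var j) = (\<Prod>j\<in>L. var i - var j) * (\<Prod>j\<in>R. var i - var j)"
    unfolding SLR by (rule prod.union_disjoint[OF fL fR LR])
  have e6: "DeltaS (S-{i}) = prod f (prs (S-{i}))" by (simp add: DeltaS_def f_def)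
  show ?thesis
    unfolding e1 e2 e3 e4 e5 e6 L_def[symmetric] by (simp add: mult_ac)
qed

lemma ren_const: "ren x y ((-1) ^ m) = (-1) ^ m"
  by (simp add: ren_power ren_uminus)

lemma DeltaS_anti:
  assumes "finite S" "a \<in> S" "b \<in> S" "a \<noteq> b"
  shows "ren a b (DeltaS S) = - DeltaS S"
  using assms
proof (induction "card S" arbitrary: S rule: less_induct)
  case less
  show ?case
  proof (cases "S = {a,b}")
    case True
    show ?thesis
    proof (cases "a < b")
      case True
      then have "prs S = {(a,b)}" using \<open>S = {a,b}\<close> by (auto simp: prs_def)
      then show ?thesis using True
        by (simp add: DeltaS_def ren_minus tr_def)
    next
      case False
      then have "prs S = {(b,a)}" using \<open>S = {a,b}\<close> \<open>a \<noteq> b\<close> by (auto simp: prs_def)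
      then show ?thesis using False
        by (simp add: DeltaS_def ren_minus tr_def)
    qed
  next
    case False
    then obtain i where i: "i \<in> S" "i \<noteq> a" "i \<noteq> b" using less.prems by blast
    have IH: "ren a b (DeltaS (S-{i})) = - DeltaS (S-{i})"
    proof -
      have "card (S-{i}) < card S" using less.prems(1) i(1) by (rule card_Diff1_less)
      then show ?thesis using less.prems i by (intro less.hyps) auto
    qed
    have G: "ren a b (\<Prod>j\<in>S-{i}. var i - var j) = (\<Prod>j\<in>S-{i}. var i - var j)"
    proof -
      have "ren a b (\<Prod>j\<in>S-{i}. var i - var j) = (\<Prod>j\<in>S-{i}. var i - var (tr a b j))"
        using i by (simp add: ren_prod ren_minus tr_def)
      also have "\<dots> = (\<Prod>j\<in>tr a b ` (S-{i}). var i - var j)"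
        by (subst prod.reindex) (auto simp: inj_on_def, metis tr_tr)
      also have "tr a b ` (S-{i}) = S-{i}"
        using less.prems i by (auto simp: tr_def image_iff)
      finally show ?thesis .
    qed
    show ?thesis
      unfolding DeltaS_split[OF less.prems(1) i(1)]
      by (simp add: ren_mult ren_const IH G)
  qed
qed

lemma lk_DeltaS_swe:
  assumes "finite S" "a \<in> S" "b \<in> S" "a \<noteq> b"
  shows "lk (DeltaS S) (swe a b e) = - lk (DeltaS S) e"
proof -
  have "lk (DeltaS S) (swe a b e) = lk (ren a b (DeltaS S)) e" by simp
  also have "\<dots> = - lk (DeltaS S) e" using DeltaS_anti[OF assms] by simp
  finally show ?thesis .
qed

lemma lk_DeltaS_rep:
  assumes "finite S" "a \<in> S" "b \<in> S" "a \<noteq> b" "lk e a = lk e b"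
  shows "lk (DeltaS S) e = 0"
proof -
  have "swe a b e = e"
    by (rule poly_mapping_eqI) (use assms in \<open>auto simp: tr_def\<close>)
  then show ?thesis using lk_DeltaS_swe[OF assms(1-4), of e] by simp
qed



lemma prod_var: "finite T \<Longrightarrow> (\<Prod>j\<in>T. var j) = sg (\<Sum>j\<in>T. sg j 1) 1"
  by (induction T rule: finite_induct) (auto simp: var_def mult_single)

lemma prod_neg_var: "finite T \<Longrightarrow> (\<Prod>j\<in>T. - var j) = (-1) ^ card T * sg (\<Sum>j\<in>T. sg j 1) 1"
proof -
  assume T: "finite T"
  have "(\<Prod>j\<in>T. - var j) = (\<Prod>j\<in>T. (-1) * var j)" by simp
  also have "\<dots> = (\<Prod>j\<in>T. (-1::rpoly)) * (\<Prod>j\<in>T. var j)" by (rule prod.distrib)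
  finally show ?thesis using prod_var[OF T] by simp
qed

lemma lk_mult_single: fixes p :: rpoly shows "lk (p * sg u c) (e + u) = lk p e * c"
proof -
  have "p * sg u c = (\<Sum>a\<in>ks p. sg a (lk p a)) * sg u c"
    using poly_expand[of p] by simp
  also have "\<dots> = (\<Sum>a\<in>ks p. sg (a + u) (lk p a * c))"
    by (simp add: sum_distrib_right mult_single)
  finally have "lk (p * sg u c) (e + u) = (\<Sum>a\<in>ks p. lk (sg (a + u) (lk p a * c)) (e + u))"
    by (simp add: lookup_sum)
  also have "\<dots> = (\<Sum>a\<in>ks p. if a = e then lk p a * c else 0)"
    by (rule sum.cong) (auto simp: lookup_single when_def)
  also have "\<dots> = lk p e * c" by (simp add: in_keys_iff)
  finally show ?thesis .
qed

lemma restr_DeltaS_out: "finite S \<Longrightarrow> i \<notin> S \<Longrightarrow> restr i (DeltaS S) = DeltaS S"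
  unfolding DeltaS_def restr_prod
  by (rule prod.cong) (auto simp: prs_def restr_minus)

lemma restr_const: "restr i ((-1) ^ m) = (-1) ^ m"
  by (simp add: restr_power restr_uminus)

lemma restr_DeltaS:
  assumes S: "finite S" and i: "i \<in> S"
  shows "restr i (DeltaS S) = (-1) ^ (card {j\<in>S. j<i} + card (S-{i}))
     * (DeltaS (S-{i}) * sg (\<Sum>j\<in>S-{i}. sg j 1) 1)"
proof -
  have "restr i (\<Prod>j\<in>S-{i}. var i - var j) = (\<Prod>j\<in>S-{i}. - var j)"
    unfolding restr_prod by (rule prod.cong) (auto simp: restr_minus)
  also have "\<dots> = (-1) ^ card (S-{i}) * sg (\<Sum>j\<in>S-{i}. sg j 1) 1"
    using S by (simp add: prod_neg_var)
  finally have G: "restr i (\<Prod>j\<in>S-{i}. var i - var j) = \<dots>" .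
  show ?thesis
    unfolding DeltaS_split[OF S i] restr_mult restr_const G
    using restr_DeltaS_out[of "S-{i}" i] S by (simp add: power_add mult_ac)
qed

lemma lk_sum_single1: "finite T \<Longrightarrow> lk (\<Sum>j\<in>T. sg j (1::nat)) k = (if k \<in> T then 1 else 0)"
  by (simp add: lookup_sum lookup_single when_def)

lemma lk_const_mult: fixes p :: rpoly shows "lk ((-1) ^ m * p) a = (-1) ^ m * lk p a"
  by (induction m) simp_all

lemma DeltaS_unit:
  assumes "finite S" "ks e \<subseteq> S" "bij_betw (lk e) S {0..<card S}"
  shows "lk (DeltaS S) e = 1 \<or> lk (DeltaS S) e = -1"
  using assms
proof (induction "card S" arbitrary: S e rule: less_induct)
  case less
  show ?case
  proof (cases "S = {}")
    case True
    then have "e = 0" using less.prems(2) by simp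
    then show ?thesis using True by (simp add: DeltaS_def prs_def)
  next
    case False
    then have "0 < card S" using less.prems(1) by (simp add: card_gt_0_iff)
    then have "0 \<in> lk e ` S" using bij_betw_imp_surj_on[OF less.prems(3)] by auto
    then obtain i where i: "i \<in> S" "lk e i = 0" by auto
    define u where "u = (\<Sum>j\<in>S-{i}. sg j (1::nat))"
    have lku: "lk u k = (if k \<in> S-{i} then 1 else 0)" for k
      unfolding u_def using less.prems(1) by (simp add: lookup_sum lookup_single when_def)
    have inj: "inj_on (lk e) S" using less.prems(3) by (simp add: bij_betw_def)
    have nz: "lk e j \<noteq> 0" if "j \<in> S-{i}" for j
      using inj i that by (metis DiffE inj_on_contraD singletonI)
    define e' where "e' = e - u"
    have lke': "lk e' k = lk e k - lk u k" for k unfolding e'_def by (simp add: lookup_minus)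
    have ee: "e = e' + u"
      by (rule poly_mapping_eqI) (use nz in \<open>auto simp: lookup_add lke' lku\<close>)
    have ks': "ks e' \<subseteq> S-{i}"
    proof
      fix k assume "k \<in> ks e'"
      then have "lk e' k \<noteq> 0" by (simp add: in_keys_iff)
      then show "k \<in> S-{i}" using less.prems(2) i by (auto simp: lke' lku in_keys_iff split: if_splits)
    qed
    have cS: "card (S-{i}) = card S - 1" using less.prems(1) i by simp
    have b1: "bij_betw (lk e) (S-{i}) ({0..<card S} - {0})"
      by (rule bij_betw_DiffI[OF less.prems(3)]) (use i \<open>0 < card S\<close> in \<open>auto simp: bij_betw_def\<close>)
    have b2: "bij_betw (\<lambda>x. x - 1) ({0..<card S} - {0}) {0..<card (S-{i})}"
      unfolding cS
      by (rule bij_betw_imageI) (auto simp: inj_on_def image_iff intro!: bexI[of _ "Suc _"])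
    have b3: "bij_betw (lk e') (S-{i}) {0..<card (S-{i})}"
      using bij_betw_trans[OF b1 b2] by (rule bij_betw_cong[THEN iffD1, rotated]) (auto simp: lke' lku)
    have IH: "lk (DeltaS (S-{i})) e' = 1 \<or> lk (DeltaS (S-{i})) e' = -1"
    proof -
      have "card (S-{i}) < card S" using less.prems(1) i(1) by (rule card_Diff1_less)
      then show ?thesis using less.prems(1) ks' b3 by (intro less.hyps) auto
    qed
    have "lk (DeltaS S) e = lk (restr i (DeltaS S)) e" using i by simp
    also have "\<dots> = (-1) ^ (card {j\<in>S. j<i} + card (S-{i})) * lk (DeltaS (S-{i})) e'"
      unfolding restr_DeltaS[OF less.prems(1) i(1)] lk_const_mult u_def[symmetric]
      by (subst ee, subst lk_mult_single) simp
    finally show ?thesis using IH by (auto simp: minus_one_power_iff)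
  qed
qed



lemma lk_pdiff: "lk (pdiff i p) a = lk p (a + sg i 1) * real (lk a i + 1)"
proof -
  have "lk (pdiff i p) a = (\<Sum>b\<in>ks p. lk (sg (b - sg i 1) (lk p b * real (lk b i))) a)"
    by (simp add: pdiff_def lookup_sum)
  also have "\<dots> = (\<Sum>b\<in>ks p. if b = a + sg i 1 then lk p b * real (lk a i + 1) else 0)"
  proof (rule sum.cong[OF refl])
    fix b
    show "lk (sg (b - sg i 1) (lk p b * real (lk b i))) a
        = (if b = a + sg i 1 then lk p b * real (lk a i + 1) else 0)"
    proof (cases "b = a + sg i 1")
      case True
      have "b - sg i 1 = a"
        by (rule poly_mapping_eqI) (simp add: True lookup_minus lookup_add)
      then show ?thesis using True by (simp add: lookup_add)
    next
      case False
      have "lk b i = 0" if "b - sg i 1 = a"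
      proof (rule ccontr)
        assume "lk b i \<noteq> 0"
        then have "b = a + sg i 1"
          by (intro poly_mapping_eqI) (auto simp: that[symmetric] lookup_minus lookup_add lookup_single when_def)
        with False show False by simp
      qed
      then show ?thesis using False by (auto simp: lookup_single when_def)
    qed
  qed
  also have "\<dots> = lk p (a + sg i 1) * real (lk a i + 1)"
    by (simp add: in_keys_iff)
  finally show ?thesis .
qed

lemma lk_pdiff_pow:
  "lk ((pdiff i ^^ m) p) a = lk p (a + sg i m) * pochhammer (real (lk a i) + 1) m"
proof (induction m arbitrary: p)
  case 0
  then show ?case by simp
next
  case (Suc m)
  have "lk ((pdiff i ^^ Suc m) p) a = lk ((pdiff i ^^ m) (pdiff i p)) a"
    by (simp add: funpow_Suc_right del: funpow.simps)
  also have "\<dots> = lk (pdiff i p) (a + sg i m) * pochhammer (real (lk a i) + 1) m"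
    by (rule Suc.IH)
  also have "\<dots> = lk p (a + sg i m + sg i 1) * real (lk a i + m + 1) * pochhammer (real (lk a i) + 1) m"
    by (simp add: lk_pdiff lookup_add)
  also have "a + sg i m + sg i 1 = a + sg i (Suc m)"
    by (simp add: add.assoc single_add[symmetric])
  finally show ?case by (simp add: pochhammer_Suc algebra_simps)
qed

lemma lk_pdiff_pow0:
  "lk a i = 0 \<Longrightarrow> lk ((pdiff i ^^ m) p) a = lk p (a + sg i m) * fact m"
  by (simp add: lk_pdiff_pow pochhammer_fact)

lemma lk_dj: "J \<subseteq> {1..n} \<Longrightarrow> lk (dj n m w J) a
   = (\<Sum>l\<in>J. (-1) ^ card {i\<in>J. i<l} * lk ((pdiff l ^^ m) (w (J-{l}))) a)"
  by (simp add: dj_def lookup_sum lk_const_mult)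

fun plc :: "(nat \<Rightarrow>\<^sub>0 nat) \<Rightarrow> nat list \<Rightarrow> nat list \<Rightarrow> (nat \<Rightarrow>\<^sub>0 nat)" where
  "plc a (v#V) (p#P) = sg p v + plc a V P"
| "plc a _ _ = a"

lemma plc_add: "plc (b + a) V P = b + plc a V P"
  by (induction a V P rule: plc.induct) (auto simp: add_ac)

lemma lk_plc_notin: "i \<notin> set P \<Longrightarrow> lk (plc a V P) i = lk a i"
  by (induction a V P rule: plc.induct) (auto simp: lookup_add lookup_single)

lemma lk_plc_nth: "distinct P \<Longrightarrow> length V = length P \<Longrightarrow> t < length P
  \<Longrightarrow> lk (plc a V P) (P!t) = lk a (P!t) + V!t"
proof (induction a V P arbitrary: t rule: plc.induct)
  case (1 a v V p P)
  show ?case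
  proof (cases t)
    case 0
    then show ?thesis using 1 by (simp add: lookup_add lk_plc_notin)
  next
    case (Suc t')
    then have "P!t' \<noteq> p" using 1 by (auto simp: nth_mem)
    then show ?thesis using 1 Suc by (simp add: lookup_add lookup_single)
  qed
qed auto

lemma swe_plc_out:
  assumes "x \<notin> set P" "y \<notin> set P" "lk a x = lk a y"
  shows "swe x y (plc a V P) = plc a V P"
  by (rule poly_mapping_eqI) (use assms in \<open>auto simp: tr_def lk_plc_notin\<close>)

lemma plc_swap:
  assumes "distinct (pre @ x # y # post)" "length V = length (pre @ x # y # post)"
    "lk a x = lk a y"
  shows "plc a V (pre @ x # y # post) = swe x y (plc a V (pre @ y # x # post))"
  using assms
proof (induction pre arbitrary: V)
  case Nil
  then obtain v1 v2 V' where V: "V = v1 # v2 # V'"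
    by (metis Suc_length_conv append_Nil)
  show ?case using Nil by (simp add: V swe_add tr_def swe_plc_out add_ac)
next
  case (Cons p pre)
  then obtain v V' where V: "V = v # V'" by (metis Suc_length_conv append_Cons)
  have "p \<noteq> x" "p \<noteq> y" using Cons.prems by auto
  then show ?case using Cons by (simp add: V swe_add tr_def)
qed

lemma move:
  assumes "distinct (pre @ l # xs @ post)" "set (pre @ l # xs @ post) \<subseteq> {1..n}"
    "\<forall>i\<in>set (pre @ l # xs @ post). lk a i = 0"
    "length V = length (pre @ l # xs @ post)"
  shows "lk (Delta n) (plc a V (pre @ l # xs @ post))
       = (-1) ^ length xs * lk (Delta n) (plc a V (pre @ xs @ l # post))"
  using assms
proof (induction xs arbitrary: pre)
  case Nil
  then show ?case by simp
next
  case (Cons x xs)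
  have "plc a V (pre @ l # x # xs @ post) = swe l x (plc a V (pre @ x # l # xs @ post))"
    by (rule plc_swap) (use Cons.prems in auto)
  then have "lk (Delta n) (plc a V (pre @ l # x # xs @ post))
      = - lk (Delta n) (plc a V (pre @ x # l # xs @ post))"
    unfolding Delta_eq by (simp only:) (rule lk_DeltaS_swe, use Cons.prems in auto)
  also have "lk (Delta n) (plc a V (pre @ x # l # xs @ post))
      = lk (Delta n) (plc a V ((pre @ [x]) @ l # xs @ post))" by simp
  also have "\<dots> = (-1) ^ length xs * lk (Delta n) (plc a V ((pre @ [x]) @ xs @ l # post))"
    by (rule Cons.IH) (use Cons.prems in auto)
  finally show ?case by simp
qed



lemma key_perm:
  assumes J: "J \<subseteq> {1..n}" and l: "l \<in> J" and a0: "\<forall>i\<in>J. lk a i = 0"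
    and len: "length ms = card J - 1"
  shows "lk (Delta n) (plc (a + sg l m) ms (sorted_list_of_set (J-{l})))
       = (-1) ^ card {i\<in>J. i<l} * lk (Delta n) (plc a (m#ms) (sorted_list_of_set J))"
proof -
  have fJ: "finite J" using J finite_subset by blast
  define js where "js = sorted_list_of_set J"
  have sj: "sorted js" "distinct js" "set js = J"
    using fJ by (auto simp: js_def)
  then obtain xs ys where js: "js = xs @ l # ys" using l by (metis split_list)
  have lx: "l \<notin> set xs" using sj(2) js by simp
  have rem: "sorted_list_of_set (J-{l}) = xs @ ys"
    using fJ by (simp add: sorted_list_of_set_remove js_def[symmetric] js lx remove1_append)
  have "{i\<in>J. i<l} = set xs"
  proof -
    have "\<forall>x\<in>set xs. x < l" using sj js by (auto simp: sorted_append order.order_iff_strict)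
    moreover have "\<forall>y\<in>set ys. l < y" using sj js by (auto simp: sorted_append order.order_iff_strict)
    ultimately show ?thesis using sj(3) js by auto
  qed
  then have cxs: "card {i\<in>J. i<l} = length xs" using sj(2) js by (simp add: distinct_card)
  have "plc (a + sg l m) ms (sorted_list_of_set (J-{l})) = plc a (m#ms) ([] @ l # xs @ ys)"
    unfolding rem by (simp add: plc_add[of "sg l m" a, unfolded add.commute[of "sg l m" a]] add.commute)
  then have "lk (Delta n) (plc (a + sg l m) ms (sorted_list_of_set (J-{l})))
     = (-1) ^ length xs * lk (Delta n) (plc a (m#ms) ([] @ xs @ l # ys))"
    using sj J a0 len js by (simp only:) (rule move, auto simp: length_sorted_list_of_set fJ card_Un_disjoint distinct_card)
  then show ?thesis using js js_def cxs by simp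
qed

lemma G:
  "\<forall>J a. J \<subseteq> {1..n} \<longrightarrow> card J = length ms \<longrightarrow> (\<forall>l\<in>J. lk a l = 0) \<longrightarrow>
     lk (omega n ms J) a = real (fact (length ms)) * real (\<Prod>m\<leftarrow>ms. fact m)
        * lk (Delta n) (plc a ms (sorted_list_of_set J))"
proof (induction ms)
  case Nil
  show ?case
  proof (intro allI impI)
    fix J :: "nat set" and a :: "nat \<Rightarrow>\<^sub>0 nat"
    assume "J \<subseteq> {1..n}" "card J = length ([]::nat list)"
    then have "J = {}" using finite_subset by fastforce
    then show "lk (omega n [] J) a = real (fact (length ([]::nat list))) * real (\<Prod>m\<leftarrow>[]. fact m)
        * lk (Delta n) (plc a [] (sorted_list_of_set J))"
      by (simp add: omega_def zero_form_def)
  qed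
next
  case (Cons m ms)
  show ?case
  proof (intro allI impI)
    fix J :: "nat set" and a :: "nat \<Rightarrow>\<^sub>0 nat"
    assume J: "J \<subseteq> {1..n}" and cJ: "card J = length (m#ms)" and a0: "\<forall>l\<in>J. lk a l = 0"
    have fJ: "finite J" using J finite_subset by blast
    define K where "K = real (fact (length ms)) * real (\<Prod>m\<leftarrow>ms. fact m) * fact m
        * lk (Delta n) (plc a (m#ms) (sorted_list_of_set J))"
    have "lk (omega n (m#ms) J) a = lk (dj n m (omega n ms) J) a"
      by (simp add: omega_def)
    also have "\<dots> = (\<Sum>l\<in>J. (-1) ^ card {i\<in>J. i<l} * lk ((pdiff l ^^ m) (omega n ms (J-{l}))) a)"
      by (rule lk_dj[OF J])
    also have "\<dots> = (\<Sum>l\<in>J. K)"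
    proof (rule sum.cong[OF refl])
      fix l assume l: "l \<in> J"
      have "lk ((pdiff l ^^ m) (omega n ms (J-{l}))) a = lk (omega n ms (J-{l})) (a + sg l m) * fact m"
        using a0 l by (simp add: lk_pdiff_pow0)
      also have "lk (omega n ms (J-{l})) (a + sg l m) = real (fact (length ms)) * real (\<Prod>m\<leftarrow>ms. fact m)
        * lk (Delta n) (plc (a + sg l m) ms (sorted_list_of_set (J-{l})))"
      proof -
        have h1: "J-{l} \<subseteq> {1..n}" using J by auto
        have h2: "card (J-{l}) = length ms" using cJ l fJ by simp
        have h3: "\<forall>l'\<in>J-{l}. lk (a + sg l m) l' = 0" using a0 by (auto simp: lookup_add lookup_single)
        show ?thesis using Cons.IH h1 h2 h3 by blast
      qed
      also have "lk (Delta n) (plc (a + sg l m) ms (sorted_list_of_set (J-{l})))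
          = (-1) ^ card {i\<in>J. i<l} * lk (Delta n) (plc a (m#ms) (sorted_list_of_set J))"
        by (rule key_perm[OF J l a0]) (use cJ in simp)
      finally show "(-1) ^ card {i\<in>J. i<l} * lk ((pdiff l ^^ m) (omega n ms (J-{l}))) a = K"
        unfolding K_def by (simp add: mult_ac power_add[symmetric])
    qed
    also have "\<dots> = real (card J) * K" by simp
    finally show "lk (omega n (m#ms) J) a = real (fact (length (m#ms))) * real (\<Prod>m\<leftarrow>m#ms. fact m)
        * lk (Delta n) (plc a (m#ms) (sorted_list_of_set J))"
      unfolding K_def cJ by (simp add: algebra_simps)
  qed
qed



lemma desc_distinct: "sorted_wrt (>) (xs::nat list) \<Longrightarrow> distinct xs"
  by (induction xs) auto

lemma desc_unique:
  assumes "sorted_wrt (>) (xs::nat list)" "sorted_wrt (>) ys" "set xs = set ys"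
  shows "xs = ys"
proof -
  have "sorted_wrt (<) (rev xs)" "sorted_wrt (<) (rev ys)"
    using assms by (simp_all add: sorted_wrt_rev)
  then have "rev xs = rev ys"
    using assms(3) by (intro sorted_distinct_set_unique) (auto simp: strict_sorted_iff)
  then show ?thesis by simp
qed

lemma sorted_list_last:
  assumes "finite A" "x \<in> A" "\<forall>y\<in>A. y \<le> (x::nat)"
  shows "sorted_list_of_set A = sorted_list_of_set (A - {x}) @ [x]"
proof (rule sorted_distinct_set_unique)
  show "sorted (sorted_list_of_set (A - {x}) @ [x])"
    using assms by (auto simp: sorted_append)
  show "distinct (sorted_list_of_set (A - {x}) @ [x])" using assms by simp
  show "set (sorted_list_of_set A) = set (sorted_list_of_set (A - {x}) @ [x])"
    using assms by auto
qed simp_all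

lemma Cmap_alt:
  assumes "1 \<le> n" "\<forall>m\<in>set xs. 1 \<le> m \<and> m \<le> n - 1"
  shows "Cmap n xs = map (\<lambda>j. n - j) (sorted_list_of_set ({1..n} - (\<lambda>m. n - m) ` set xs - {n}))"
proof -
  have "sorted_list_of_set ({1..n} - (\<lambda>m. n - m) ` set xs)
      = sorted_list_of_set ({1..n} - (\<lambda>m. n - m) ` set xs - {n}) @ [n]"
    by (rule sorted_list_last) (use assms in auto)
  then show ?thesis by (simp add: Cmap_def)
qed

lemma Cmap_set:
  assumes "1 \<le> n" "\<forall>m\<in>set xs. 1 \<le> m \<and> m \<le> n - 1"
  shows "set (Cmap n xs) = {1..n-1} - set xs"
proof -
  have "(\<lambda>j. n - j) ` ({1..n} - (\<lambda>m. n - m) ` set xs - {n}) = {1..n-1} - set xs"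
  proof safe
    fix j assume "j \<in> {1..n}" "j \<notin> (\<lambda>m. n - m) ` set xs" "j \<noteq> n"
    then show "n - j \<in> {1..n-1}" by auto
    show "n - j \<in> set xs \<Longrightarrow> False"
      using \<open>j \<notin> _\<close> \<open>j \<in> {1..n}\<close> by (metis atLeastAtMost_iff diff_diff_cancel image_eqI)
  next
    fix v assume v: "v \<in> {1..n-1}" "v \<notin> set xs"
    show "v \<in> (\<lambda>j. n - j) ` ({1..n} - (\<lambda>m. n - m) ` set xs - {n})"
    proof (rule image_eqI[where x="n - v"])
      show "v = n - (n - v)" using v by auto
      have "n - v \<notin> (\<lambda>m. n - m) ` set xs"
      proof
        assume "n - v \<in> (\<lambda>m. n - m) ` set xs"
        then obtain m where "m \<in> set xs" "n - v = n - m" by auto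
        then have "m = v" using v assms by fastforce
        then show False using v \<open>m \<in> set xs\<close> by simp
      qed
      then show "n - v \<in> {1..n} - (\<lambda>m. n - m) ` set xs - {n}" using v by auto
    qed
  qed
  then show ?thesis using assms by (simp add: Cmap_alt)
qed

lemma Cmap_sorted:
  assumes "1 \<le> n" "\<forall>m\<in>set xs. 1 \<le> m \<and> m \<le> n - 1"
  shows "sorted_wrt (>) (Cmap n xs)"
proof -
  let ?L = "sorted_list_of_set ({1..n} - (\<lambda>m. n - m) ` set xs - {n})"
  have s: "sorted_wrt (<) ?L" by simp
  have b: "\<forall>j\<in>set ?L. j < n" by auto
  have "sorted_wrt (\<lambda>x y. n - y < n - x) ?L"
    by (rule sorted_wrt_mono_rel[OF _ s]) (use b in auto)
  then show ?thesis using assms by (simp add: Cmap_alt sorted_wrt_map)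
qed

lemma Cmap_invol:
  assumes "1 \<le> n" "\<forall>m\<in>set xs. 1 \<le> m \<and> m \<le> n - 1" "sorted_wrt (>) xs"
  shows "Cmap n (Cmap n xs) = xs"
proof -
  have s1: "\<forall>m\<in>set (Cmap n xs). 1 \<le> m \<and> m \<le> n - 1" using Cmap_set[OF assms(1,2)] by auto
  show ?thesis
  proof (rule desc_unique)
    show "sorted_wrt (>) (Cmap n (Cmap n xs))" by (rule Cmap_sorted[OF assms(1) s1])
    show "sorted_wrt (>) xs" by fact
    show "set (Cmap n (Cmap n xs)) = set xs"
      using Cmap_set[OF assms(1) s1] Cmap_set[OF assms(1,2)] assms(2) by auto
  qed
qed

lemma Cmap_length:
  assumes "1 \<le> n" "\<forall>m\<in>set xs. 1 \<le> m \<and> m \<le> n - 1" "sorted_wrt (>) xs"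
  shows "length (Cmap n xs) = n - 1 - length xs"
proof -
  have "length (Cmap n xs) = card (set (Cmap n xs))"
    using desc_distinct[OF Cmap_sorted[OF assms(1,2)]] by (simp add: distinct_card)
  also have "\<dots> = card ({1..n-1} - set xs)" using Cmap_set[OF assms(1,2)] by simp
  also have "\<dots> = n - 1 - card (set xs)"
    by (subst card_Diff_subset) (use assms(2) in auto)
  also have "card (set xs) = length xs" using desc_distinct[OF assms(3)] by (simp add: distinct_card)
  finally show ?thesis .
qed

lemma lk_mono_exp: "lk (mono_exp cs) j = (if 1 \<le> j \<and> j \<le> length cs then cs ! (j - 1) else 0)"
proof -
  have "lk (mono_exp cs) j = (\<Sum>t<length cs. if t = j - 1 \<and> 1 \<le> j then cs ! t else 0)"
    unfolding mono_exp_def lookup_sum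
    by (rule sum.cong) (auto simp: lookup_single when_def)
  also have "\<dots> = (if 1 \<le> j \<and> j \<le> length cs then cs ! (j - 1) else 0)"
    by (cases "1 \<le> j") (auto simp: sum.delta')
  finally show ?thesis .
qed



theorem lemma11:
  fixes n k :: nat and ms :: "nat list"
  assumes "n \<ge> 2" and "1 \<le> k" and "k \<le> n - 1"
    and "length ms = k" and "sorted_wrt (>) ms" and "\<forall>m\<in>set ms. 1 \<le> m \<and> m \<le> n - 1"
  shows "Cmap n (Cmap n ms) = ms
    \<and> coeff_of (omega n ms {n-k+1..n}) (mono_exp (Cmap n ms))
           \<in> {real (fact k * (\<Prod>m\<leftarrow>ms. fact m)), - real (fact k * (\<Prod>m\<leftarrow>ms. fact m))}
    \<and> (\<forall>rs. length rs = k \<and> sorted_wrt (>) rs \<and> (\<forall>r\<in>set rs. 1 \<le> r \<and> r \<le> n - 1) \<and>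
           coeff_of (omega n rs {n-k+1..n}) (mono_exp (Cmap n ms)) \<noteq> 0 \<longrightarrow> rs = ms)"
proof -
  note A = assms
  have n1: "1 \<le> n" using A by simp
  define cs where "cs = Cmap n ms"
  define L where "L = length cs"
  have L: "L = n - 1 - k" unfolding L_def cs_def using Cmap_length[OF n1 A(6) A(5)] A(4) by simp
  have setcs: "set cs = {1..n-1} - set ms" unfolding cs_def by (rule Cmap_set[OF n1 A(6)])
  define c where "c = mono_exp cs"
  have lkc: "lk c j = (if 1 \<le> j \<and> j \<le> L then cs ! (j - 1) else 0)" for j
    unfolding c_def L_def by (rule lk_mono_exp)
  define J0 where "J0 = {n-k+1..n}"
  define P0 where "P0 = [n-k+1..<n+1]"
  have sJ0: "sorted_list_of_set J0 = P0"
    unfolding J0_def P0_def by (simp add: atLeastLessThanSuc_atLeastAtMost[symmetric])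
  have J0sub: "J0 \<subseteq> {1..n}" unfolding J0_def by auto
  have cJ0: "card J0 = k" unfolding J0_def using A by simp
  have c0: "\<forall>l\<in>J0. lk c l = 0" unfolding J0_def using A by (auto simp: lkc L)
  have lkE: "lk (plc c V P0) j = (if n-k+1 \<le> j \<and> j \<le> n then V ! (j - (n-k+1))
        else if 1 \<le> j \<and> j \<le> L then cs ! (j - 1) else 0)" if lV: "length V = k" for V j
  proof (cases "n-k+1 \<le> j \<and> j \<le> n")
    case True
    define t where "t = j - (n-k+1)"
    have t1: "t < length P0" using True A by (simp add: P0_def t_def; linarith)
    have t2: "P0 ! t = j" using True A t1 by (simp add: P0_def t_def nth_upt del: upt_Suc; linarith)
    note t = t1 t2
    have "lk (plc c V P0) (P0 ! t) = lk c (P0 ! t) + V ! t"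
      by (rule lk_plc_nth) (use t lV A in \<open>auto simp: P0_def\<close>)
    then show ?thesis using True t c0 by (simp add: J0_def t_def)
  next
    case False
    then have "j \<notin> set P0" by (auto simp: P0_def)
    then have "lk (plc c V P0) j = lk c j" by (rule lk_plc_notin)
    then show ?thesis using False by (auto simp: lkc)
  qed
  have lkJ: "lk (plc c V P0) (n-k+1+t) = V ! t" if "t < k" "length V = k" for V t
  proof -
    have cnd: "n-k+1 \<le> n-k+1+t \<and> n-k+1+t \<le> n" using that A by auto
    show ?thesis using lkE[OF that(2), of "n-k+1+t"] unfolding if_P[OF cnd] by simp
  qed
  have lkC: "lk (plc c V P0) (Suc t) = cs ! t" if "t < L" "length V = k" for V t
  proof -
    have cnd: "\<not> (n-k+1 \<le> Suc t \<and> Suc t \<le> n)" using that A by (auto simp: L)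
    have cnd2: "1 \<le> Suc t \<and> Suc t \<le> L" using that by auto
    show ?thesis using lkE[OF that(2), of "Suc t"] unfolding if_not_P[OF cnd] if_P[OF cnd2] by simp
  qed
  have lkZ: "lk (plc c V P0) (n-k) = 0" if "length V = k" for V
  proof -
    have cnd: "\<not> (n-k+1 \<le> n-k \<and> n-k \<le> n)" by auto
    have cnd2: "\<not> (1 \<le> n-k \<and> n-k \<le> L)" using A by (auto simp: L)
    show ?thesis using lkE[OF that, of "n-k"] unfolding if_not_P[OF cnd] if_not_P[OF cnd2] .
  qed
  have coef: "coeff_of (omega n V J0) c = real (fact k) * real (\<Prod>m\<leftarrow>V. fact m) * lk (Delta n) (plc c V P0)"
    if "length V = k" for V
    using G[of n V] J0sub cJ0 c0 that by (simp add: coeff_of_def sJ0)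
  have D: "Delta n = DeltaS {1..n}" by (rule Delta_eq)
  have unit: "lk (Delta n) (plc c ms P0) = 1 \<or> lk (Delta n) (plc c ms P0) = -1"
    unfolding D
  proof (rule DeltaS_unit)
    show "finite {1..n}" by simp
    show "ks (plc c ms P0) \<subseteq> {1..n}"
    proof
      fix j assume "j \<in> ks (plc c ms P0)"
      then have "lk (plc c ms P0) j \<noteq> 0" by (simp add: in_keys_iff)
      then show "j \<in> {1..n}" using lkE[OF A(4), of j] A by (auto simp: L split: if_splits)
    qed
    have img: "lk (plc c ms P0) ` {1..n} = {0..<card {1..n}}"
    proof
      show "lk (plc c ms P0) ` {1..n} \<subseteq> {0..<card {1..n}}"
      proof
        fix v assume "v \<in> lk (plc c ms P0) ` {1..n}"
        then obtain j where j: "j \<in> {1..n}" "v = lk (plc c ms P0) j" by auto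
        show "v \<in> {0..<card {1..n}}"
        proof (cases "n-k+1 \<le> j \<and> j \<le> n")
          case True
          then have "v = ms ! (j - (n-k+1))" using j lkE[OF A(4)] by simp
          moreover have "j - (n-k+1) < length ms" using True A by auto
          ultimately have "v \<in> set ms" by simp
          then show ?thesis using A by force
        next
          case False
          show ?thesis
          proof (cases "1 \<le> j \<and> j \<le> L")
            case True
            then have "v = cs ! (j - 1)" using False j lkE[OF A(4)] by simp
            moreover have "j - 1 < length cs" using True by (auto simp: L_def)
            ultimately have "v \<in> set cs" by simp
            then show ?thesis using setcs by force
          next
            case False2: False
            then have "v = 0" using False j lkE[OF A(4)] by simp
            then show ?thesis using A by simp
          qed
        qed
      qed
      show "{0..<card {1..n}} \<subseteq> lk (plc c ms P0) ` {1..n}"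
      proof
        fix v assume "v \<in> {0..<card {1..n}}"
        then have v: "v < n" by simp
        show "v \<in> lk (plc c ms P0) ` {1..n}"
        proof (cases "v = 0")
          case True
          have "lk (plc c ms P0) (n-k) = 0" by (rule lkZ[OF A(4)])
          moreover have "n-k \<in> {1..n}" using A by auto
          ultimately show ?thesis using True by (metis image_eqI)
        next
          case False
          show ?thesis
          proof (cases "v \<in> set ms")
            case True
            then obtain t where t: "t < length ms" "ms ! t = v" by (auto simp: in_set_conv_nth)
            have "lk (plc c ms P0) (n-k+1+t) = v" using lkJ[OF _ A(4), of t] t A by auto
            moreover have "n-k+1+t \<in> {1..n}" using t A by auto
            ultimately show ?thesis by (metis image_eqI)
          next
            case False2: False
            then have "v \<in> set cs" using setcs False v by auto
            then obtain t where t: "t < L" "cs ! t = v" by (auto simp: in_set_conv_nth L_def)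
            have "lk (plc c ms P0) (Suc t) = v" using lkC[OF _ A(4), of t] t by auto
            moreover have "Suc t \<in> {1..n}" using t A by (auto simp: L)
            ultimately show ?thesis by (metis image_eqI)
          qed
        qed
      qed
    qed
    show "bij_betw (lk (plc c ms P0)) {1..n} {0..<card {1..n}}"
    proof (rule bij_betw_imageI[OF _ img])
      show "inj_on (lk (plc c ms P0)) {1..n}"
        by (rule eq_card_imp_inj_on) (simp, unfold img, simp)
    qed
  qed
  have part2: "coeff_of (omega n ms {n-k+1..n}) (mono_exp (Cmap n ms))
           \<in> {real (fact k * (\<Prod>m\<leftarrow>ms. fact m)), - real (fact k * (\<Prod>m\<leftarrow>ms. fact m))}"
    using coef[OF A(4)] unit unfolding J0_def c_def cs_def by auto
  have part3: "rs = ms" if rs: "length rs = k" "sorted_wrt (>) rs" "\<forall>r\<in>set rs. 1 \<le> r \<and> r \<le> n - 1"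
    "coeff_of (omega n rs {n-k+1..n}) (mono_exp (Cmap n ms)) \<noteq> 0" for rs
  proof -
    have nz: "lk (Delta n) (plc c rs P0) \<noteq> 0"
      using coef[OF rs(1)] rs(4) unfolding J0_def c_def cs_def by auto
    have sub: "set rs \<subseteq> set ms"
    proof
      fix r assume r: "r \<in> set rs"
      show "r \<in> set ms"
      proof (rule ccontr)
        assume "r \<notin> set ms"
        then have "r \<in> set cs" using setcs r rs(3) by auto
        then obtain t where t: "t < L" "cs ! t = r" by (auto simp: in_set_conv_nth L_def)
        obtain s where s: "s < k" "rs ! s = r" using r rs(1) by (auto simp: in_set_conv_nth)
        have e1: "lk (plc c rs P0) (Suc t) = r" using lkC[OF _ rs(1), of t] t by auto
        have e2: "lk (plc c rs P0) (n-k+1+s) = r" using lkJ[OF _ rs(1), of s] s by auto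
        have "lk (DeltaS {1..n}) (plc c rs P0) = 0"
          by (rule lk_DeltaS_rep[of _ "Suc t" "n-k+1+s"]) (use t s A e1 e2 in \<open>auto simp: L\<close>)
        then show False using nz D by simp
      qed
    qed
    have "set rs = set ms"
      by (rule card_subset_eq[OF _ sub]) (use desc_distinct[OF rs(2)] desc_distinct[OF A(5)] rs(1) A(4)
          in \<open>auto simp: distinct_card\<close>)
    then show ?thesis using desc_unique[OF rs(2) A(5)] by simp
  qed
  show ?thesis using Cmap_invol[OF n1 A(6) A(5)] part2 part3 by blast
qed

end
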